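(* Let $q \ge 2$ and $n$ be integers, let $k \le \lfloor n/2\rfloor - 1$ be a nonnegative integer, and set $u = \lfloor n/2\rfloor + 1$ and $v = n-k$. If $u < v$ and $$\frac{\binom{n-k-1}{n-v}}{\binom{n-k-1}{n-u}} > \frac{(q^{2v-n}-1)\binom{n}{v}}{(q^{2u-n}-1)\binom{n}{u}},$$ then $k$-uniform states in $(\mathbb{C}^q)^{\otimes n}$ do not exist.
   Context: A pure state $|\psi\rangle \in (\mathbb{C}^q)^{\otimes n}$ is called $k$-uniform if, with $\rho = |\psi\rangle\langle\psi|$, for every subset $S \subseteq \{1,\dots,n\}$ with $|S| = k$ the reduced state of $\rho$ on the parties in $S$ equals $I/q^k$, where $I$ is the identity on $(\mathbb{C}^q)^{\otimes k}$. *)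

theory Defs
  imports Complex_Main "HOL-Library.FuncSet"
begin

text \<open>Computational basis of (C^q)^{\<otimes>n}: index tuples i : {0..<n} \<rightarrow> {0..<q}
  (extensional functions).\<close>

definition tuples :: "nat set \<Rightarrow> nat \<Rightarrow> (nat \<Rightarrow> nat) set" where
  "tuples S q = S \<rightarrow>\<^sub>E {0..<q}"

definition is_pure_state :: "nat \<Rightarrow> nat \<Rightarrow> ((nat \<Rightarrow> nat) \<Rightarrow> complex) \<Rightarrow> bool" where
  "is_pure_state n q psi \<longleftrightarrow>
     (\<forall>i. i \<notin> tuples {0..<n} q \<longrightarrow> psi i = 0) \<and>
     (\<Sum>i\<in>tuples {0..<n} q. (cmod (psi i))\<^sup>2) = 1"

text \<open>Matrix entry (a,b) of the reduced state of |psi><psi| on the parties in S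
  (partial trace over the complement {0..<n} - S); a, b range over tuples S q.\<close>
definition reduced_state ::
  "nat \<Rightarrow> nat \<Rightarrow> ((nat \<Rightarrow> nat) \<Rightarrow> complex) \<Rightarrow> nat set \<Rightarrow> (nat \<Rightarrow> nat) \<Rightarrow> (nat \<Rightarrow> nat) \<Rightarrow> complex" where
  "reduced_state n q psi S a b =
     (\<Sum>c\<in>tuples ({0..<n} - S) q.
        psi (\<lambda>j. if j \<in> S then a j else c j) * cnj (psi (\<lambda>j. if j \<in> S then b j else c j)))"

definition k_uniform :: "nat \<Rightarrow> nat \<Rightarrow> nat \<Rightarrow> ((nat \<Rightarrow> nat) \<Rightarrow> complex) \<Rightarrow> bool" where
  "k_uniform n q k psi \<longleftrightarrow> is_pure_state n q psi \<and>
     (\<forall>S. S \<subseteq> {0..<n} \<and> card S = k \<longrightarrow>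
        (\<forall>a\<in>tuples S q. \<forall>b\<in>tuples S q.
           reduced_state n q psi S a b = (if a = b then 1 / of_nat (q ^ k) else 0)))"

end

theory Submission
  imports Defs
begin

definition mg :: "nat set \<Rightarrow> (nat \<Rightarrow> nat) \<Rightarrow> (nat \<Rightarrow> nat) \<Rightarrow> nat \<Rightarrow> nat" where
  "mg A c x = (\<lambda>j. if j \<in> A then c j else x j)"

type_synonym mat = "(nat \<Rightarrow> nat) \<Rightarrow> (nat \<Rightarrow> nat) \<Rightarrow> complex"

definition TW :: "nat \<Rightarrow> nat set \<Rightarrow> mat \<Rightarrow> mat" where
  "TW q A X = (\<lambda>x y. if (\<forall>j\<in>A. x j = y j)
      then (\<Sum>c\<in>tuples A q. X (mg A c x) (mg A c y)) / of_nat q ^ card A else 0)"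

lemma mg_in_tuples:
  assumes "A \<subseteq> D" "a \<in> tuples (D - A) q" "c \<in> tuples A q"
  shows "mg A c a \<in> tuples D q"
  using assms unfolding tuples_def mg_def PiE_iff extensional_def by auto

lemma SD:
  assumes "finite D" "A \<subseteq> D"
  shows "(\<Sum>x\<in>tuples D q. G x) = (\<Sum>a\<in>tuples (D - A) q. \<Sum>c\<in>tuples A q. G (mg A c a))"
proof -
  have "(\<Sum>a\<in>tuples (D - A) q. \<Sum>c\<in>tuples A q. G (mg A c a))
      = (\<Sum>p\<in>tuples (D - A) q \<times> tuples A q. G (mg A (snd p) (fst p)))"
    by (simp add: sum.cartesian_product split_def)
  also have "\<dots> = (\<Sum>x\<in>tuples D q. G x)"
  proof (rule sum.reindex_bij_witness[where i = "\<lambda>x. (restrict x (D - A), restrict x A)"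
        and j = "\<lambda>p. mg A (snd p) (fst p)"])
    fix p assume p: "p \<in> tuples (D - A) q \<times> tuples A q"
    then show "(restrict (mg A (snd p) (fst p)) (D - A), restrict (mg A (snd p) (fst p)) A) = p"
      unfolding tuples_def mg_def PiE_iff extensional_def
      by (cases p) (auto simp: fun_eq_iff restrict_def)
    show "mg A (snd p) (fst p) \<in> tuples D q"
      using p assms by (auto intro: mg_in_tuples)
  next
    fix x assume x: "x \<in> tuples D q"
    then show "mg A (snd (restrict x (D - A), restrict x A)) (fst (restrict x (D - A), restrict x A)) = x"
      using assms unfolding tuples_def mg_def PiE_iff extensional_def
      by (auto simp: fun_eq_iff restrict_def)
    show "(restrict x (D - A), restrict x A) \<in> tuples (D - A) q \<times> tuples A q"
      using x assms unfolding tuples_def by auto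
  qed (simp)
  finally show ?thesis by simp
qed

lemma card_tuples: "finite A \<Longrightarrow> card (tuples A q) = q ^ card A"
  unfolding tuples_def by (simp add: card_PiE)

lemma finite_tuples[simp]: "finite A \<Longrightarrow> finite (tuples A q)"
  unfolding tuples_def by (simp add: finite_PiE)

lemma mg_mg[simp]: "mg A c (mg A d x) = mg A c x"
  by (simp add: mg_def fun_eq_iff)

lemma mg_empty[simp]: "mg {} c x = x"
  by (simp add: mg_def)

lemma tuples_empty: "tuples {} q = {\<lambda>_. undefined}"
  unfolding tuples_def by simp

lemma TW_empty[simp]: "TW q {} X = X"
  by (simp add: TW_def tuples_empty fun_eq_iff)

lemma TW_idem:
  assumes "finite A" "q > 0"
  shows "TW q A (TW q A X) = TW q A X"
proof (intro ext)
  fix x y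
  have cond: "\<forall>j\<in>A. mg A c x j = mg A c y j" for c by (simp add: mg_def)
  have "(\<Sum>c\<in>tuples A q. TW q A X (mg A c x) (mg A c y))
      = (\<Sum>c\<in>tuples A q. (\<Sum>d\<in>tuples A q. X (mg A d x) (mg A d y)) / of_nat q ^ card A)"
    by (rule sum.cong) (simp_all add: TW_def cond)
  also have "\<dots> = (\<Sum>d\<in>tuples A q. X (mg A d x) (mg A d y))"
    using assms by (simp add: card_tuples)
  finally show "TW q A (TW q A X) x y = TW q A X x y"
    by (simp add: TW_def)
qed

lemma TW_diff:
  "TW q A (\<lambda>x y. X x y - Y x y) = (\<lambda>x y. TW q A X x y - TW q A Y x y)"
  by (auto simp: TW_def fun_eq_iff sum_subtractf diff_divide_distrib)

lemma TW_TW: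
  assumes "finite A" "finite B" "A \<inter> B = {}"
  shows "TW q A (TW q B X) = TW q (A \<union> B) X"
proof (intro ext)
  fix x y
  have SU: "(\<Sum>e\<in>tuples (A \<union> B) q. G e) = (\<Sum>c\<in>tuples A q. \<Sum>d\<in>tuples B q. G (mg B d c))" for G
  proof -
    have "(A \<union> B) - B = A" using assms by auto
    then show ?thesis using SD[where D="A \<union> B" and A=B and q=q and G=G] assms by simp
  qed
  show "TW q A (TW q B X) x y = TW q (A \<union> B) X x y"
  proof (cases "\<forall>j\<in>A \<union> B. x j = y j")
    case True
    have e: "mg (A \<union> B) (mg B d c) x = mg B d (mg A c x)" for c d
      by (auto simp: mg_def fun_eq_iff)
    have e2: "mg (A \<union> B) (mg B d c) y = mg B d (mg A c y)" for c d
      by (auto simp: mg_def fun_eq_iff)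
    have "TW q A (TW q B X) x y = (\<Sum>c\<in>tuples A q. (\<Sum>d\<in>tuples B q. X (mg B d (mg A c x)) (mg B d (mg A c y))) / of_nat q ^ card B) / of_nat q ^ card A"
      using True assms by (auto simp: TW_def mg_def intro!: sum.cong)
    also have "\<dots> = (\<Sum>c\<in>tuples A q. \<Sum>d\<in>tuples B q. X (mg B d (mg A c x)) (mg B d (mg A c y))) / (of_nat q ^ card A * of_nat q ^ card B)"
      by (simp add: sum_divide_distrib[symmetric] mult.commute)
    also have "\<dots> = TW q (A \<union> B) X x y"
      using True assms by (simp add: TW_def SU e e2 card_Un_disjoint power_add)
    finally show ?thesis .
  next
    case False
    show ?thesis
    proof (cases "\<forall>j\<in>A. x j = y j")
      case True
      with False obtain j where j: "j \<in> B" "x j \<noteq> y j" by auto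
      have "\<not> (\<forall>j\<in>B. mg A c x j = mg A c y j)" for c
        using j assms by (auto simp: mg_def)
      then have "TW q B X (mg A c x) (mg A c y) = 0" for c
        unfolding TW_def by meson
      then have "TW q A (TW q B X) x y = 0"
        unfolding TW_def[of q A] by simp
      moreover have "TW q (A \<union> B) X x y = 0" using False unfolding TW_def by auto
      ultimately show ?thesis by simp
    next
      case F2: False
      have "TW q A (TW q B X) x y = 0" using F2 unfolding TW_def[of q A] by auto
      moreover have "TW q (A \<union> B) X x y = 0" using False unfolding TW_def by auto
      ultimately show ?thesis by simp
    qed
  qed
qed

definition ip :: "nat set \<Rightarrow> nat \<Rightarrow> mat \<Rightarrow> mat \<Rightarrow> complex" where
  "ip D q X Y = (\<Sum>x\<in>tuples D q. \<Sum>y\<in>tuples D q. X x y * cnj (Y x y))"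

definition nrm :: "nat set \<Rightarrow> nat \<Rightarrow> mat \<Rightarrow> real" where
  "nrm D q X = (\<Sum>x\<in>tuples D q. \<Sum>y\<in>tuples D q. (cmod (X x y))\<^sup>2)"

lemma ip_nrm: "ip D q X X = of_real (nrm D q X)"
  by (simp only: ip_def nrm_def of_real_sum complex_norm_square)

lemma nrm_nonneg: "nrm D q X \<ge> 0"
  unfolding nrm_def by (intro sum_nonneg) auto

lemma ip_cnj: "cnj (ip D q X Y) = ip D q Y X"
  by (simp add: ip_def cnj_sum mult.commute)

lemma tuples_ext:
  assumes "e \<in> tuples A q" "e' \<in> tuples A q"
  shows "(\<forall>j\<in>A. e j = e' j) \<longleftrightarrow> e = e'"
  using assms unfolding tuples_def PiE_iff extensional_def by (auto simp: fun_eq_iff)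

lemma mg_A_eq: "(\<forall>j\<in>A. mg A e a j = mg A e' b j) \<longleftrightarrow> (\<forall>j\<in>A. e j = e' j)"
  by (simp add: mg_def)

lemma aux_prod: "(\<Sum>e\<in>E. (sum z C / d) * w e) = (\<Sum>c\<in>C. \<Sum>e\<in>E. z c * w e) / (d::complex)"
proof -
  have "(\<Sum>e\<in>E. (sum z C / d) * w e) = (sum z C / d) * sum w E" by (simp add: sum_distrib_left)
  also have "\<dots> = (sum z C * sum w E) / d" by simp
  also have "sum z C * sum w E = (\<Sum>c\<in>C. \<Sum>e\<in>E. z c * w e)" by (rule sum_product)
  finally show ?thesis .
qed

lemma EXP:
  assumes "finite D" "A \<subseteq> D"
  shows "ip D q (TW q A Z) W = (\<Sum>a\<in>tuples (D - A) q. \<Sum>b\<in>tuples (D - A) q.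
     \<Sum>c\<in>tuples A q. \<Sum>e\<in>tuples A q. Z (mg A c a) (mg A c b) * cnj (W (mg A e a) (mg A e b))) / of_nat q ^ card A"
proof -
  have fA: "finite A" using assms finite_subset by auto
  let ?Z = "\<lambda>a b. (\<Sum>c\<in>tuples A q. Z (mg A c a) (mg A c b)) / of_nat q ^ card A"
  have inner: "(\<Sum>e'\<in>tuples A q. TW q A Z (mg A e a) (mg A e' b) * cnj (W (mg A e a) (mg A e' b)))
      = ?Z a b * cnj (W (mg A e a) (mg A e b))" if e: "e \<in> tuples A q" for a b e
  proof -
    have "(\<Sum>e'\<in>tuples A q. TW q A Z (mg A e a) (mg A e' b) * cnj (W (mg A e a) (mg A e' b)))
       = (\<Sum>e'\<in>tuples A q. if e = e' then ?Z a b * cnj (W (mg A e a) (mg A e' b)) else 0)"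
      by (rule sum.cong[OF refl]) (simp add: TW_def mg_A_eq tuples_ext[OF e])
    also have "\<dots> = ?Z a b * cnj (W (mg A e a) (mg A e b))"
      using e fA by (simp add: sum.delta)
    finally show ?thesis .
  qed
  have "ip D q (TW q A Z) W = (\<Sum>a\<in>tuples (D - A) q. \<Sum>e\<in>tuples A q. \<Sum>b\<in>tuples (D - A) q.
      \<Sum>e'\<in>tuples A q. TW q A Z (mg A e a) (mg A e' b) * cnj (W (mg A e a) (mg A e' b)))"
    unfolding ip_def by (subst SD[OF assms]) (simp add: SD[OF assms])
  also have "\<dots> = (\<Sum>a\<in>tuples (D - A) q. \<Sum>e\<in>tuples A q. \<Sum>b\<in>tuples (D - A) q.
      ?Z a b * cnj (W (mg A e a) (mg A e b)))"
    by (intro sum.cong refl) (simp add: inner)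
  also have "\<dots> = (\<Sum>a\<in>tuples (D - A) q. \<Sum>b\<in>tuples (D - A) q. \<Sum>e\<in>tuples A q.
      ?Z a b * cnj (W (mg A e a) (mg A e b)))"
    by (rule sum.cong[OF refl], rule sum.swap)
  also have "\<dots> = (\<Sum>a\<in>tuples (D - A) q. \<Sum>b\<in>tuples (D - A) q.
     (\<Sum>c\<in>tuples A q. \<Sum>e\<in>tuples A q. Z (mg A c a) (mg A c b) * cnj (W (mg A e a) (mg A e b))) / of_nat q ^ card A)"
    by (intro sum.cong refl) (rule aux_prod)
  also have "\<dots> = (\<Sum>a\<in>tuples (D - A) q. \<Sum>b\<in>tuples (D - A) q.
     \<Sum>c\<in>tuples A q. \<Sum>e\<in>tuples A q. Z (mg A c a) (mg A c b) * cnj (W (mg A e a) (mg A e b))) / of_nat q ^ card A"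
    by (simp add: sum_divide_distrib)
  finally show ?thesis .
qed

lemma SA:
  assumes "finite D" "A \<subseteq> D"
  shows "ip D q (TW q A Z) W = ip D q Z (TW q A W)"
proof -
  have "ip D q Z (TW q A W) = cnj (ip D q (TW q A W) Z)" by (simp add: ip_cnj)
  also have "\<dots> = (\<Sum>a\<in>tuples (D - A) q. \<Sum>b\<in>tuples (D - A) q.
     \<Sum>c\<in>tuples A q. \<Sum>e\<in>tuples A q. cnj (W (mg A c a) (mg A c b)) * Z (mg A e a) (mg A e b)) / of_nat q ^ card A"
    by (simp add: EXP[OF assms] cnj_sum)
  also have "\<dots> = (\<Sum>a\<in>tuples (D - A) q. \<Sum>b\<in>tuples (D - A) q.
     \<Sum>c\<in>tuples A q. \<Sum>e\<in>tuples A q. Z (mg A e a) (mg A e b) * cnj (W (mg A c a) (mg A c b))) / of_nat q ^ card A"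
    by (simp add: mult.commute)
  also have "\<dots> = ip D q (TW q A Z) W"
    unfolding EXP[OF assms]
    apply (rule arg_cong[where f="\<lambda>t. t / _"])
    apply (rule sum.cong[OF refl])
    apply (rule sum.cong[OF refl])
    apply (rule sum.swap)
    done
  finally show ?thesis by simp
qed

lemma ip_zero: "ip D q X (\<lambda>x y. 0) = 0"
  by (simp add: ip_def)

lemma PYTH:
  assumes "finite D" "A \<subseteq> D" "q > 0"
  shows "nrm D q X = nrm D q (TW q A X) + nrm D q (\<lambda>x y. X x y - TW q A X x y)"
proof -
  have fA: "finite A" using assms finite_subset by auto
  let ?P = "TW q A X" and ?Q = "\<lambda>x y. X x y - TW q A X x y"
  have PQ: "ip D q ?P ?Q = 0"
  proof -
    have "ip D q ?P ?Q = ip D q X (TW q A ?Q)" by (rule SA[OF assms(1,2)])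
    also have "TW q A ?Q = (\<lambda>x y. 0)"
      by (simp add: TW_diff TW_idem[OF fA assms(3)])
    finally show ?thesis by (simp add: ip_zero)
  qed
  have QP: "ip D q ?Q ?P = 0" using PQ ip_cnj[of D q ?P ?Q] by simp
  have "ip D q X X = ip D q ?P ?P + ip D q ?P ?Q + ip D q ?Q ?P + ip D q ?Q ?Q"
    unfolding ip_def by (simp add: sum.distrib[symmetric] algebra_simps)
  then have "of_real (nrm D q X) = (of_real (nrm D q ?P + nrm D q ?Q) :: complex)"
    using PQ QP by (simp add: ip_nrm)
  then show ?thesis using of_real_eq_iff by blast
qed

lemma HPOS:
  assumes D: "finite D" and q: "q > 0"
  shows "finite R \<Longrightarrow> R \<subseteq> D \<Longrightarrow> 0 \<le> (\<Sum>W\<in>Pow R. (-1) ^ card W * nrm D q (TW q W X))"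
proof (induction R arbitrary: X rule: finite_induct)
  case empty
  then show ?case by (simp add: nrm_nonneg)
next
  case (insert i R)
  have iD: "{i} \<subseteq> D" using insert by auto
  let ?X' = "\<lambda>x y. X x y - TW q {i} X x y"
  have disj: "Pow R \<inter> insert i ` Pow R = {}" using insert by auto
  have inj: "inj_on (insert i) (Pow R)"
    using insert unfolding inj_on_def by (metis Pow_iff insert_ident subset_iff)
  have key: "(-1) ^ card W * nrm D q (TW q W X) + (-1) ^ card (insert i W) * nrm D q (TW q (insert i W) X)
      = (-1) ^ card W * nrm D q (TW q W ?X')" if W: "W \<in> Pow R" for W
  proof -
    have fW: "finite W" using W insert finite_subset by auto
    have iW: "i \<notin> W" using W insert by auto
    have c: "card (insert i W) = Suc (card W)" using fW iW by simp
    have t1: "TW q (insert i W) X = TW q W (TW q {i} X)"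
      using TW_TW[of W "{i}" q X] fW iW by simp
    have t2: "TW q {i} (TW q W X) = TW q W (TW q {i} X)"
      using TW_TW[of W "{i}" q X] TW_TW[of "{i}" W q X] fW iW by (simp add: Un_commute)
    have p: "nrm D q (TW q W X) = nrm D q (TW q W (TW q {i} X)) + nrm D q (TW q W ?X')"
      using PYTH[OF D iD q, of "TW q W X"] by (simp add: t2 TW_diff)
    show ?thesis using p by (simp add: c t1 algebra_simps)
  qed
  have "(\<Sum>W\<in>Pow (insert i R). (-1) ^ card W * nrm D q (TW q W X))
      = (\<Sum>W\<in>Pow R. (-1) ^ card W * nrm D q (TW q W X))
        + (\<Sum>W\<in>insert i ` Pow R. (-1) ^ card W * nrm D q (TW q W X))"
    unfolding Pow_insert using insert disj by (simp add: sum.union_disjoint)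
  also have "(\<Sum>W\<in>insert i ` Pow R. (-1) ^ card W * nrm D q (TW q W X))
      = (\<Sum>W\<in>Pow R. (-1) ^ card (insert i W) * nrm D q (TW q (insert i W) X))"
    by (simp add: sum.reindex[OF inj])
  also have "(\<Sum>W\<in>Pow R. (-1) ^ card W * nrm D q (TW q W X))
      + (\<Sum>W\<in>Pow R. (-1) ^ card (insert i W) * nrm D q (TW q (insert i W) X))
      = (\<Sum>W\<in>Pow R. (-1) ^ card W * nrm D q (TW q W ?X'))"
    by (simp add: sum.distrib[symmetric] key)
  finally show ?case using insert.IH[of ?X'] insert.prems by simp
qed

lemma cs_sum:
  fixes f :: "'a \<Rightarrow> real"
  assumes "finite S"
  shows "(sum f S)\<^sup>2 \<le> real (card S) * (\<Sum>x\<in>S. (f x)\<^sup>2)"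
proof -
  define N where "N = real (card S)"
  define s where "s = sum f S"
  have "0 \<le> (\<Sum>x\<in>S. (N * f x - s)\<^sup>2)" by (intro sum_nonneg) auto
  also have "\<dots> = N\<^sup>2 * (\<Sum>x\<in>S. (f x)\<^sup>2) - 2 * N * s * s + N * s\<^sup>2"
    by (simp add: power2_eq_square algebra_simps sum.distrib sum_subtractf sum_distrib_left
        sum_distrib_right N_def s_def)
  finally have "N * s\<^sup>2 \<le> N * (N * (\<Sum>x\<in>S. (f x)\<^sup>2))"
    by (simp add: power2_eq_square algebra_simps)
  show ?thesis
  proof (cases "N = 0")
    case True
    then have "S = {}" using assms by (simp add: N_def)
    then show ?thesis by simp
  next
    case False
    then have "N > 0" by (simp add: N_def)
    with \<open>N * s\<^sup>2 \<le> N * (N * (\<Sum>x\<in>S. (f x)\<^sup>2))\<close> have "s\<^sup>2 \<le> N * (\<Sum>x\<in>S. (f x)\<^sup>2)"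
      by (simp add: mult_le_cancel_left_pos)
    then show ?thesis by (simp add: N_def s_def)
  qed
qed

lemma swap3: "(\<Sum>b\<in>A. \<Sum>c\<in>C. \<Sum>e\<in>E. f b c e) = (\<Sum>c\<in>C. \<Sum>e\<in>E. \<Sum>b\<in>A. f b c e)"
proof -
  have "(\<Sum>b\<in>A. \<Sum>c\<in>C. \<Sum>e\<in>E. f b c e) = (\<Sum>c\<in>C. \<Sum>b\<in>A. \<Sum>e\<in>E. f b c e)" by (rule sum.swap)
  also have "\<dots> = (\<Sum>c\<in>C. \<Sum>e\<in>E. \<Sum>b\<in>A. f b c e)" by (rule sum.cong[OF refl], rule sum.swap)
  finally show ?thesis .
qed

lemma swap4: "(\<Sum>a\<in>A. \<Sum>b\<in>A. \<Sum>c\<in>C. \<Sum>e\<in>C. f a b c e) = (\<Sum>c\<in>C. \<Sum>e\<in>C. \<Sum>a\<in>A. \<Sum>b\<in>A. f a b c e)"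
proof -
  have "(\<Sum>a\<in>A. \<Sum>b\<in>A. \<Sum>c\<in>C. \<Sum>e\<in>C. f a b c e) = (\<Sum>a\<in>A. \<Sum>c\<in>C. \<Sum>e\<in>C. \<Sum>b\<in>A. f a b c e)"
    by (rule sum.cong[OF refl], rule swap3)
  also have "\<dots> = (\<Sum>c\<in>C. \<Sum>e\<in>C. \<Sum>a\<in>A. \<Sum>b\<in>A. f a b c e)" by (rule swap3)
  finally show ?thesis .
qed

definition rho :: "((nat \<Rightarrow> nat) \<Rightarrow> complex) \<Rightarrow> mat" where
  "rho psi = (\<lambda>x y. psi x * cnj (psi y))"

definition EE :: "nat set \<Rightarrow> nat \<Rightarrow> ((nat \<Rightarrow> nat) \<Rightarrow> complex) \<Rightarrow> nat set \<Rightarrow> complex" where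
  "EE D q psi A = (\<Sum>a\<in>tuples (D - A) q. \<Sum>b\<in>tuples (D - A) q. \<Sum>c\<in>tuples A q. \<Sum>e\<in>tuples A q.
     psi (mg A c a) * cnj (psi (mg A c b)) * cnj (psi (mg A e a) * cnj (psi (mg A e b))))"

lemma nrm_EE:
  assumes "finite D" "A \<subseteq> D" "q > 0"
  shows "of_nat q ^ card A * of_real (nrm D q (TW q A (rho psi))) = EE D q psi A"
proof -
  have fA: "finite A" using assms finite_subset by auto
  have "of_real (nrm D q (TW q A (rho psi))) = ip D q (TW q A (rho psi)) (TW q A (rho psi))"
    by (simp add: ip_nrm)
  also have "\<dots> = ip D q (rho psi) (TW q A (TW q A (rho psi)))" by (rule SA[OF assms(1,2)])
  also have "\<dots> = ip D q (rho psi) (TW q A (rho psi))" by (simp add: TW_idem[OF fA assms(3)])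
  also have "\<dots> = ip D q (TW q A (rho psi)) (rho psi)" by (rule SA[OF assms(1,2), symmetric])
  also have "\<dots> = EE D q psi A / of_nat q ^ card A"
    by (simp add: EXP[OF assms(1,2)] EE_def rho_def)
  finally show ?thesis using assms(3) by simp
qed

lemma mg_compl:
  assumes "A \<subseteq> D" "a \<in> tuples A q" "c \<in> tuples (D - A) q"
  shows "mg (D - A) c a = mg A a c"
  using assms unfolding mg_def tuples_def PiE_iff extensional_def by (auto simp: fun_eq_iff)

lemma EE_compl:
  assumes "finite D" "A \<subseteq> D"
  shows "EE D q psi (D - A) = EE D q psi A"
proof -
  have DD: "D - (D - A) = A" using assms by auto
  have "EE D q psi (D - A) = (\<Sum>a\<in>tuples A q. \<Sum>b\<in>tuples A q. \<Sum>c\<in>tuples (D - A) q. \<Sum>e\<in>tuples (D - A) q.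
     psi (mg A a c) * cnj (psi (mg A b c)) * cnj (psi (mg A a e) * cnj (psi (mg A b e))))"
    unfolding EE_def DD
    by (intro sum.cong refl) (simp add: mg_compl[OF assms(2)])
  also have "\<dots> = (\<Sum>c\<in>tuples (D - A) q. \<Sum>e\<in>tuples (D - A) q. \<Sum>a\<in>tuples A q. \<Sum>b\<in>tuples A q.
     psi (mg A a c) * cnj (psi (mg A b c)) * cnj (psi (mg A a e) * cnj (psi (mg A b e))))"
    by (rule swap4)
  also have "\<dots> = EE D q psi A"
    unfolding EE_def by (intro sum.cong refl) (simp add: algebra_simps)
  finally show ?thesis .
qed

lemma PURITY:
  assumes "finite D" "A \<subseteq> D" "q > 0"
  shows "real q ^ card A * nrm D q (TW q A (rho psi)) = real q ^ card (D - A) * nrm D q (TW q (D - A) (rho psi))"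
proof -
  have "complex_of_real (real q ^ card A * nrm D q (TW q A (rho psi))) = EE D q psi A"
    using nrm_EE[OF assms] by simp
  also have "\<dots> = EE D q psi (D - A)" by (rule EE_compl[OF assms(1,2), symmetric])
  also have "\<dots> = complex_of_real (real q ^ card (D - A) * nrm D q (TW q (D - A) (rho psi)))"
    using nrm_EE[OF assms(1) _ assms(3), of "D - A"] by auto
  finally show ?thesis using of_real_eq_iff by blast
qed

lemma TRACE:
  assumes "finite D" "A \<subseteq> D" "q > 0"
  shows "(\<Sum>x\<in>tuples D q. TW q A X x x) = (\<Sum>x\<in>tuples D q. X x x)"
proof -
  have fA: "finite A" using assms finite_subset by auto
  have "(\<Sum>x\<in>tuples D q. TW q A X x x) = (\<Sum>a\<in>tuples (D - A) q. \<Sum>e\<in>tuples A q.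
      (\<Sum>c\<in>tuples A q. X (mg A c a) (mg A c a)) / of_nat q ^ card A)"
    by (subst SD[OF assms(1,2)]) (simp add: TW_def)
  also have "\<dots> = (\<Sum>a\<in>tuples (D - A) q. \<Sum>c\<in>tuples A q. X (mg A c a) (mg A c a))"
    using fA assms(3) by (simp add: card_tuples)
  also have "\<dots> = (\<Sum>x\<in>tuples D q. X x x)"
    by (rule SD[OF assms(1,2), symmetric])
  finally show ?thesis .
qed

lemma LOWER:
  assumes "finite D" "A \<subseteq> D" "q > 0" "(\<Sum>x\<in>tuples D q. X x x) = 1"
  shows "real q ^ card D * nrm D q (TW q A X) \<ge> 1"
proof -
  let ?Z = "TW q A X"
  have tr: "(\<Sum>x\<in>tuples D q. Re (?Z x x)) = 1"
    using TRACE[OF assms(1-3), of X] assms(4) by (simp flip: Re_sum)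
  have "(\<Sum>x\<in>tuples D q. (Re (?Z x x))\<^sup>2) \<le> (\<Sum>x\<in>tuples D q. (cmod (?Z x x))\<^sup>2)"
    by (intro sum_mono) (metis abs_Re_le_cmod abs_ge_zero power2_abs power_mono)
  also have "\<dots> \<le> nrm D q ?Z"
    unfolding nrm_def using assms(1)
    by (intro sum_mono member_le_sum) auto
  finally have 1: "(\<Sum>x\<in>tuples D q. (Re (?Z x x))\<^sup>2) \<le> nrm D q ?Z" .
  have "1 = (\<Sum>x\<in>tuples D q. Re (?Z x x))\<^sup>2" using tr by simp
  also have "\<dots> \<le> real (card (tuples D q)) * (\<Sum>x\<in>tuples D q. (Re (?Z x x))\<^sup>2)"
    by (rule cs_sum) (simp add: assms(1))
  also have "\<dots> \<le> real q ^ card D * nrm D q ?Z"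
    using 1 assms(1) by (simp add: card_tuples mult_left_mono)
  finally show ?thesis .
qed

lemma mg_in_tuples2:
  assumes "A \<subseteq> D" "x \<in> tuples D q" "c \<in> tuples A q"
  shows "mg A c x \<in> tuples D q"
  using assms unfolding tuples_def mg_def PiE_iff extensional_def by auto

lemma TW_cong_TD:
  assumes "A \<subseteq> D" "\<forall>x\<in>tuples D q. \<forall>y\<in>tuples D q. X x y = Y x y" "x \<in> tuples D q" "y \<in> tuples D q"
  shows "TW q A X x y = TW q A Y x y"
  unfolding TW_def using assms mg_in_tuples2[OF assms(1)] by (auto intro!: sum.cong)

lemma TW_Id:
  assumes "finite A" "q > 0"
  shows "TW q A (\<lambda>x y. if x = y then z else 0) = (\<lambda>x y. if x = y then z else 0)"
proof (intro ext)
  fix x y :: "nat \<Rightarrow> nat"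
  show "TW q A (\<lambda>x y. if x = y then z else 0) x y = (if x = y then z else 0)"
  proof (cases "\<forall>j\<in>A. x j = y j")
    case True
    have "mg A c x = mg A c y \<longleftrightarrow> x = y" for c
      using True by (auto simp: mg_def fun_eq_iff)
    then have "TW q A (\<lambda>x y. if x = y then z else 0) x y
       = (\<Sum>c\<in>tuples A q. (if x = y then z else 0)) / of_nat q ^ card A"
      using True by (simp add: TW_def)
    also have "\<dots> = (if x = y then z else 0)"
      using assms by (simp add: card_tuples)
    finally show ?thesis .
  next
    case False
    then have "x \<noteq> y" by auto
    then show ?thesis using False by (auto simp: TW_def)
  qed
qed

lemma nrm_Id:
  assumes "finite D"
  shows "nrm D q (\<lambda>x y. if x = y then z else 0) = real q ^ card D * (cmod z)\<^sup>2"
proof -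
  have "nrm D q (\<lambda>x y. if x = y then z else 0) = (\<Sum>x\<in>tuples D q. (cmod z)\<^sup>2)"
    unfolding nrm_def using assms
    by (intro sum.cong refl) (simp add: if_distrib[of "\<lambda>t. (cmod t)\<^sup>2"] sum.delta cong: if_cong)
  also have "\<dots> = real q ^ card D * (cmod z)\<^sup>2" using assms by (simp add: card_tuples)
  finally show ?thesis .
qed

definition Qf :: "nat \<Rightarrow> nat \<Rightarrow> ((nat \<Rightarrow> nat) \<Rightarrow> complex) \<Rightarrow> nat set \<Rightarrow> real" where
  "Qf n q psi S = real q ^ n * nrm {0..<n} q (TW q ({0..<n} - S) (rho psi))"

lemma trace_rho:
  assumes "is_pure_state n q psi"
  shows "(\<Sum>x\<in>tuples {0..<n} q. rho psi x x) = 1"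
proof -
  have "(\<Sum>x\<in>tuples {0..<n} q. rho psi x x) = of_real (\<Sum>x\<in>tuples {0..<n} q. (cmod (psi x))\<^sup>2)"
    by (simp only: rho_def of_real_sum complex_norm_square)
  moreover have "(\<Sum>x\<in>tuples {0..<n} q. (cmod (psi x))\<^sup>2) = 1"
    using assms unfolding is_pure_state_def by blast
  ultimately show ?thesis by (simp only: of_real_1)
qed

lemma F3:
  assumes "is_pure_state n q psi" "q > 0" "S \<subseteq> {0..<n}"
  shows "Qf n q psi S \<ge> 1"
  using LOWER[of "{0..<n}" "{0..<n} - S" q "rho psi"] trace_rho[OF assms(1)] assms(2)
  by (simp add: Qf_def)

lemma F2:
  assumes "q > 0" "S \<subseteq> {0..<n}"
  shows "real q ^ card ({0..<n} - S) * Qf n q psi S = real q ^ card S * Qf n q psi ({0..<n} - S)"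
proof -
  have DD: "{0..<n} - ({0..<n} - S) = S" using assms by auto
  have "real q ^ card ({0..<n} - S) * nrm {0..<n} q (TW q ({0..<n} - S) (rho psi))
      = real q ^ card S * nrm {0..<n} q (TW q S (rho psi))"
    using PURITY[of "{0..<n}" "{0..<n} - S" q psi] assms DD by auto
  then show ?thesis unfolding Qf_def DD by (simp add: algebra_simps)
qed

lemma F1_S0:
  assumes ku: "k_uniform n q k psi" and q: "q > 0" and S0: "S0 \<subseteq> {0..<n}" "card S0 = k"
    and x: "x \<in> tuples {0..<n} q" and y: "y \<in> tuples {0..<n} q"
  shows "TW q ({0..<n} - S0) (rho psi) x y = (if x = y then 1 / of_nat q ^ n else 0)"
proof -
  let ?D = "{0..<n}"
  have rx: "restrict x S0 \<in> tuples S0 q" and ry: "restrict y S0 \<in> tuples S0 q"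
    using x y S0 unfolding tuples_def by auto
  have eqf: "(\<lambda>j. if j \<in> S0 then restrict x' S0 j else c j) = mg (?D - S0) c x'"
    if "x' \<in> tuples ?D q" "c \<in> tuples (?D - S0) q" for x' c
    using that S0 unfolding tuples_def mg_def PiE_iff extensional_def by (auto simp: fun_eq_iff)
  have rs: "reduced_state n q psi S0 (restrict x S0) (restrict y S0)
      = (\<Sum>c\<in>tuples (?D - S0) q. psi (mg (?D - S0) c x) * cnj (psi (mg (?D - S0) c y)))"
    unfolding reduced_state_def using x y by (intro sum.cong refl) (simp add: eqf)
  have rs2: "reduced_state n q psi S0 (restrict x S0) (restrict y S0)
      = (if restrict x S0 = restrict y S0 then 1 / of_nat (q ^ k) else 0)"
    using ku rx ry S0 unfolding k_uniform_def by blast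
  have iff: "((\<forall>j\<in>?D - S0. x j = y j) \<and> restrict x S0 = restrict y S0) \<longleftrightarrow> x = y"
  proof
    assume h: "(\<forall>j\<in>?D - S0. x j = y j) \<and> restrict x S0 = restrict y S0"
    show "x = y"
    proof
      fix j
      show "x j = y j"
      proof (cases "j \<in> S0")
        case True
        then show ?thesis using h by (metis restrict_apply')
      next
        case False
        show ?thesis
        proof (cases "j \<in> ?D")
          case True
          then show ?thesis using h False by blast
        next
          case F2: False
          then show ?thesis using x y unfolding tuples_def PiE_iff extensional_def by auto
        qed
      qed
    qed
  qed simp
  have cD: "card (?D - S0) = n - k" using S0 by (simp add: card_Diff_subset finite_subset)
  have pw: "(of_nat q ^ k * of_nat q ^ (n - k) :: complex) = of_nat q ^ n"
    using S0 card_mono[OF _ S0(1)] by (simp add: power_add[symmetric])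
  show ?thesis
  proof (cases "\<forall>j\<in>?D - S0. x j = y j")
    case True
    then have "TW q (?D - S0) (rho psi) x y = reduced_state n q psi S0 (restrict x S0) (restrict y S0) / of_nat q ^ (n - k)"
      by (simp add: TW_def rs rho_def cD)
    also have "\<dots> = (if x = y then 1 / of_nat q ^ n else 0)"
      using iff True rs2 pw by (auto simp: divide_divide_eq_left)
    finally show ?thesis .
  next
    case False
    then show ?thesis using iff by (auto simp: TW_def)
  qed
qed

lemma nrm_cong:
  assumes "\<forall>x\<in>tuples D q. \<forall>y\<in>tuples D q. X x y = Y x y"
  shows "nrm D q X = nrm D q Y"
  unfolding nrm_def using assms by (intro sum.cong refl) auto

lemma F1:
  assumes ku: "k_uniform n q k psi" and q: "q > 0" and kn: "k \<le> n"
    and S: "S \<subseteq> {0..<n}" "card S \<le> k"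
  shows "Qf n q psi S = 1"
proof -
  let ?D = "{0..<n}"
  have fS: "finite S" using S finite_subset by auto
  have "k - card S \<le> card (?D - S)" using S kn by (simp add: card_Diff_subset fS)
  then obtain T where T: "T \<subseteq> ?D - S" "card T = k - card S" "finite T"
    by (rule obtain_subset_with_card_n)
  define S0 where "S0 = S \<union> T"
  have S0D: "S0 \<subseteq> ?D" using T S by (auto simp: S0_def)
  have cS0: "card S0 = k" unfolding S0_def using T S fS by (subst card_Un_disjoint) auto
  have SS0: "S \<subseteq> S0" by (auto simp: S0_def)
  have un: "(S0 - S) \<union> (?D - S0) = ?D - S" using SS0 S0D by auto
  have fin: "finite (S0 - S)" "finite (?D - S0)" using S0D finite_subset by auto
  have disj: "(S0 - S) \<inter> (?D - S0) = {}" by auto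
  have tt: "TW q (?D - S) (rho psi) = TW q (S0 - S) (TW q (?D - S0) (rho psi))"
    using TW_TW[OF fin disj, of q "rho psi"] un by simp
  let ?I = "\<lambda>x y. if x = y then 1 / of_nat q ^ n else (0::complex)"
  have "\<forall>x\<in>tuples ?D q. \<forall>y\<in>tuples ?D q. TW q (?D - S) (rho psi) x y = ?I x y"
  proof (intro ballI)
    fix x y assume x: "x \<in> tuples ?D q" and y: "y \<in> tuples ?D q"
    have "TW q (S0 - S) (TW q (?D - S0) (rho psi)) x y = TW q (S0 - S) ?I x y"
      by (rule TW_cong_TD[where D="?D"]) (use S0D x y F1_S0[OF ku q S0D cS0] in auto)
    also have "\<dots> = ?I x y"
      using TW_Id[of "S0 - S" q "1 / of_nat q ^ n"] S0D q finite_subset by (metis finite_Diff finite_atLeastLessThan)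
    finally show "TW q (?D - S) (rho psi) x y = ?I x y" using tt by simp
  qed
  then have "nrm ?D q (TW q (?D - S) (rho psi)) = nrm ?D q ?I" by (rule nrm_cong)
  also have "\<dots> = real q ^ n * (1 / real q ^ n)\<^sup>2"
    by (simp add: nrm_Id norm_divide norm_power)
  finally show ?thesis using q by (simp add: Qf_def power2_eq_square)
qed

definition Af :: "nat \<Rightarrow> nat \<Rightarrow> ((nat \<Rightarrow> nat) \<Rightarrow> complex) \<Rightarrow> nat set \<Rightarrow> real" where
  "Af n q psi R = (-1) ^ card R * (\<Sum>T\<in>Pow R. (-1) ^ card T * Qf n q psi T)"

lemma MOBIUS:
  assumes "finite S"
  shows "Qf n q psi S = (\<Sum>R\<in>Pow S. Af n q psi R)"
  unfolding Af_def
  by (rule inclusion_exclusion_symmetric[where g="\<lambda>R. (\<Sum>T\<in>Pow R. (-1) ^ card T * Qf n q psi T)"])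
     (simp_all add: assms)

lemma Af_nonneg:
  assumes q: "q > 0" and R: "R \<subseteq> {0..<n}"
  shows "Af n q psi R \<ge> 0"
proof -
  let ?D = "{0..<n}"
  have fR: "finite R" using R finite_subset by auto
  let ?Y = "TW q (?D - R) (rho psi)"
  have "Af n q psi R = (\<Sum>T\<in>Pow R. (-1) ^ (card R + card T) * Qf n q psi T)"
    unfolding Af_def by (simp add: sum_distrib_left power_add mult.assoc)
  also have "\<dots> = (\<Sum>W\<in>Pow R. (-1) ^ (card R + card (R - W)) * Qf n q psi (R - W))"
    using Diff_Diff_Int Int_absorb1
    by (intro sum.reindex_bij_witness[where i="\<lambda>T. R - T" and j="\<lambda>W. R - W"]) (auto simp: Diff_Diff_Int Int_absorb1 Int_absorb2)
  also have "\<dots> = (\<Sum>W\<in>Pow R. real q ^ n * ((-1) ^ card W * nrm ?D q (TW q W ?Y)))"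
  proof (rule sum.cong[OF refl])
    fix W assume W: "W \<in> Pow R"
    have fW: "finite W" using W fR finite_subset by auto
    have cW: "card (R - W) = card R - card W" "card W \<le> card R"
      using W fR by (auto simp: card_Diff_subset fW card_mono)
    have pw: "((-1::real) ^ (card R + card (R - W))) = (-1) ^ card W"
    proof -
      have "card R + card (R - W) = card W + 2 * (card R - card W)" using cW by simp
      then show ?thesis by (simp add: power_add power_mult)
    qed
    have dj: "W \<inter> (?D - R) = {}" using W by auto
    have "?D - (R - W) = W \<union> (?D - R)" using W R by auto
    then have "TW q (?D - (R - W)) (rho psi) = TW q W ?Y"
      using TW_TW[of W "?D - R" q "rho psi"] fW dj by simp
    then show "(-1) ^ (card R + card (R - W)) * Qf n q psi (R - W)
        = real q ^ n * ((-1) ^ card W * nrm ?D q (TW q W ?Y))"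
      by (simp add: Qf_def pw)
  qed
  also have "\<dots> = real q ^ n * (\<Sum>W\<in>Pow R. (-1) ^ card W * nrm ?D q (TW q W ?Y))"
    by (simp add: sum_distrib_left)
  also have "\<dots> \<ge> 0"
    using HPOS[of ?D q R ?Y] q fR R by simp
  finally show ?thesis .
qed

lemma alt_sum_zero:
  assumes "finite R" "R \<noteq> {}"
  shows "(\<Sum>T\<in>Pow R. (-1::real) ^ card T) = 0"
proof (rule sum_alternating_cancels)
  show "finite (Pow R)" using assms by simp
  have "card {T. T \<subseteq> R \<and> {} \<subseteq> T \<and> even (card T)} = card {T. T \<subseteq> R \<and> {} \<subseteq> T \<and> odd (card T)}"
    using card_subsupersets_even_odd[of R "{}"] assms by auto
  then show "card {x \<in> Pow R. even (card x)} = card {x \<in> Pow R. odd (card x)}"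
    by simp
qed

lemma Af_zero:
  assumes ku: "k_uniform n q k psi" and q: "q > 0" and kn: "k \<le> n"
    and R: "R \<subseteq> {0..<n}" "card R \<le> k" "R \<noteq> {}"
  shows "Af n q psi R = 0"
proof -
  have fR: "finite R" using R finite_subset by auto
  have "(\<Sum>T\<in>Pow R. (-1) ^ card T * Qf n q psi T) = (\<Sum>T\<in>Pow R. (-1::real) ^ card T)"
  proof (rule sum.cong[OF refl])
    fix T assume "T \<in> Pow R"
    then have TR: "T \<subseteq> R" by auto
    then have "card T \<le> card R" by (rule card_mono[OF fR])
    then have "T \<subseteq> {0..<n}" "card T \<le> k" using R TR by auto
    then show "(-1) ^ card T * Qf n q psi T = (-1) ^ card T" using F1[OF ku q kn] by simp
  qed
  then show ?thesis unfolding Af_def using alt_sum_zero[OF fR R(3)] by simp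
qed

lemma binom_ratio:
  assumes kb: "k \<le> b" and bN: "b \<le> N" and NM: "N \<le> M"
  shows "(M choose k) * (N choose b) \<le> (N choose k) * (M choose b)"
  using NM
proof (induction M rule: dec_induct)
  case base
  then show ?case by (simp add: mult.commute)
next
  case (step M)
  define x where "x = Suc M"
  have e1: "(x - k) * (x choose k) = x * (M choose k)"
    using binomial_absorb_comp[of x k] by (simp add: x_def)
  have e2: "(x - b) * (x choose b) = x * (M choose b)"
    using binomial_absorb_comp[of x b] by (simp add: x_def)
  have le: "x - b \<le> x - k" using kb by simp
  have pos: "0 < (x - b) * (x - k)" using kb bN step.hyps by (simp add: x_def)
  have "((x - b) * (x - k)) * ((x choose k) * (N choose b)) = (x - b) * (x * (M choose k)) * (N choose b)"
    using e1 by (metis mult.assoc mult.commute)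
  also have "\<dots> \<le> (x - k) * (x * (M choose k)) * (N choose b)"
    using le by (intro mult_right_mono) auto
  also have "\<dots> = (x - k) * x * ((M choose k) * (N choose b))" by (simp add: mult_ac)
  also have "\<dots> \<le> (x - k) * x * ((N choose k) * (M choose b))"
    using step.IH by (intro mult_left_mono) auto
  also have "\<dots> = (x - k) * (N choose k) * (x * (M choose b))" by (simp add: mult_ac)
  also have "\<dots> = ((x - b) * (x - k)) * ((N choose k) * (x choose b))"
    using e2 by (metis mult.assoc mult.commute)
  finally have "((x - b) * (x - k)) * ((x choose k) * (N choose b)) \<le> ((x - b) * (x - k)) * ((N choose k) * (x choose b))" .
  then show ?case using pos by (simp add: x_def)
qed

lemma count_supersets:
  assumes "finite D" "R \<subseteq> D" "card R \<le> m"
  shows "card {S. S \<subseteq> D \<and> card S = m \<and> R \<subseteq> S} = (card D - card R) choose (m - card R)"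
proof -
  have fR: "finite R" using assms finite_subset by auto
  have "bij_betw (\<lambda>S. S - R) {S. S \<subseteq> D \<and> card S = m \<and> R \<subseteq> S} {U. U \<subseteq> D - R \<and> card U = m - card R}"
  proof (rule bij_betw_byWitness[where f'="\<lambda>U. U \<union> R"])
    show "\<forall>a\<in>{S. S \<subseteq> D \<and> card S = m \<and> R \<subseteq> S}. a - R \<union> R = a" by auto
    show "\<forall>a'\<in>{U. U \<subseteq> D - R \<and> card U = m - card R}. a' \<union> R - R = a'" by auto
    show "(\<lambda>S. S - R) ` {S. S \<subseteq> D \<and> card S = m \<and> R \<subseteq> S} \<subseteq> {U. U \<subseteq> D - R \<and> card U = m - card R}"
    proof clarify
      fix S assume "S \<subseteq> D" "R \<subseteq> S" "m = card S"
      then show "S - R \<subseteq> D - R \<and> card (S - R) = card S - card R"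
        using assms(1) finite_subset by (auto simp: card_Diff_subset fR)
    qed
    show "(\<lambda>U. U \<union> R) ` {U. U \<subseteq> D - R \<and> card U = m - card R} \<subseteq> {S. S \<subseteq> D \<and> card S = m \<and> R \<subseteq> S}"
    proof clarify
      fix U assume U: "U \<subseteq> D - R" "card U = m - card R"
      then have fU: "finite U" using assms(1) finite_subset by auto
      have "card (U \<union> R) = card U + card R" using U fU fR by (subst card_Un_disjoint) auto
      then show "U \<union> R \<subseteq> D \<and> card (U \<union> R) = m \<and> R \<subseteq> U \<union> R"
        using U assms by auto
    qed
  qed
  then have "card {S. S \<subseteq> D \<and> card S = m \<and> R \<subseteq> S} = card {U. U \<subseteq> D - R \<and> card U = m - card R}"
    by (rule bij_betw_same_card)
  also have "\<dots> = card (D - R) choose (m - card R)" using assms by (simp add: n_subsets)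
  finally show ?thesis using assms by (simp add: card_Diff_subset fR)
qed

theorem theorem5:
  fixes q n k u v :: nat
  assumes "q \<ge> 2"
    and "k + 1 \<le> n div 2"
    and "u = n div 2 + 1"
    and "v = n - k"
    and "u < v"
    and "real ((n - k - 1) choose (n - v)) / real ((n - k - 1) choose (n - u)) >
         ((real q ^ (2 * v - n) - 1) * real (n choose v)) /
         ((real q ^ (2 * u - n) - 1) * real (n choose u))"
  shows "\<not> (\<exists>psi. k_uniform n q k psi)"
proof
  assume "\<exists>psi. k_uniform n q k psi"
  then obtain psi where ku: "k_uniform n q k psi" by blast
  let ?D = "{0..<n}"
  let ?Q = "Qf n q psi"
  let ?A = "Af n q psi"
  have q0: "q > 0" using assms(1) by simp
  have kn: "k \<le> n" using assms(2) by simp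
  have n2: "2 \<le> n" using assms(2) by simp
  have un: "u \<le> n" using assms(3) n2 by simp
  have u2: "n < 2 * u" using assms(3) by simp
  have k2: "2 * k \<le> n" using assms(2) by simp
  have nv: "n - v = k" using assms(4) kn by simp
  have ku1: "k + 1 \<le> u" using assms(2,3) by simp
  have kb: "k < n - u" using assms(4,5) by simp
  define Sm where "Sm m = {S. S \<subseteq> ?D \<and> card S = m}" for m
  define PK where "PK = {R. R \<subseteq> ?D \<and> k < card R}"
  define cnt where "cnt m R = card {S \<in> Sm m. R \<subseteq> S}" for m R
  have finSm: "finite (Sm m)" for m
    by (rule finite_subset[of _ "Pow ?D"]) (auto simp: Sm_def)
  have finPK: "finite PK"
    by (rule finite_subset[of _ "Pow ?D"]) (auto simp: PK_def)
  have A0: "?A {} = 1"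
    using F1[OF ku q0 kn, of "{}"] by (simp add: Af_def)
  have E1: "(\<Sum>S\<in>Sm m. ?Q S - 1) = (\<Sum>R\<in>PK. ?A R * real (cnt m R))" for m
  proof -
    have "(\<Sum>S\<in>Sm m. ?Q S - 1) = (\<Sum>S\<in>Sm m. \<Sum>R\<in>{R \<in> PK. R \<subseteq> S}. ?A R)"
    proof (rule sum.cong[OF refl])
      fix S assume S: "S \<in> Sm m"
      then have SD: "S \<subseteq> ?D" by (simp add: Sm_def)
      then have fS: "finite S" using finite_subset by auto
      have "?Q S = (\<Sum>R\<in>Pow S. ?A R)" by (rule MOBIUS[OF fS])
      also have "\<dots> = ?A {} + (\<Sum>R\<in>Pow S - {{}}. ?A R)"
        using fS by (simp add: sum.remove[of "Pow S" "{}"])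
      also have "(\<Sum>R\<in>Pow S - {{}}. ?A R) = (\<Sum>R\<in>{R \<in> PK. R \<subseteq> S}. ?A R)"
      proof (rule sum.mono_neutral_right)
        show "finite (Pow S - {{}})" using fS by simp
        show "{R \<in> PK. R \<subseteq> S} \<subseteq> Pow S - {{}}" by (auto simp: PK_def)
        show "\<forall>i\<in>Pow S - {{}} - {R \<in> PK. R \<subseteq> S}. ?A i = 0"
        proof
          fix i assume i: "i \<in> Pow S - {{}} - {R \<in> PK. R \<subseteq> S}"
          then have "i \<subseteq> ?D" "card i \<le> k" "i \<noteq> {}" using SD by (auto simp: PK_def)
          then show "?A i = 0" using Af_zero[OF ku q0 kn] by blast
        qed
      qed
      finally show "?Q S - 1 = (\<Sum>R\<in>{R \<in> PK. R \<subseteq> S}. ?A R)" using A0 by simp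
    qed
    also have "\<dots> = (\<Sum>R\<in>PK. \<Sum>S\<in>{S \<in> Sm m. R \<subseteq> S}. ?A R)"
      by (rule sum.swap_restrict[OF finSm finPK])
    also have "\<dots> = (\<Sum>R\<in>PK. ?A R * real (cnt m R))"
      by (simp add: cnt_def mult.commute)
    finally show ?thesis .
  qed
  have cntv: "cnt m R = (n - card R) choose (m - card R)" if "R \<subseteq> ?D" "card R \<le> m" for m R
  proof -
    have "{S \<in> Sm m. R \<subseteq> S} = {S. S \<subseteq> ?D \<and> card S = m \<and> R \<subseteq> S}" by (auto simp: Sm_def)
    then show ?thesis unfolding cnt_def using count_supersets[of ?D R m] that by simp
  qed
  have cnt0: "cnt m R = 0" if "m < card R" for m R
  proof -
    have "{S \<in> Sm m. R \<subseteq> S} = {}"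
    proof (rule ccontr)
      assume "{S \<in> Sm m. R \<subseteq> S} \<noteq> {}"
      then obtain S where "S \<subseteq> ?D" "card S = m" "R \<subseteq> S" by (auto simp: Sm_def)
      then have "card R \<le> m" using card_mono[of S R] finite_subset[of S ?D] by auto
      then show False using that by simp
    qed
    then show ?thesis unfolding cnt_def by (metis card.empty)
  qed
  define M where "M = n - k - 1"
  define b where "b = n - u"
  define r where "r = real (M choose k) / real (M choose b)"
  have bM: "b \<le> M" using ku1 un by (simp add: M_def b_def)
  have Mb: "0 < M choose b" using bM by simp
  have r0: "r \<ge> 0" by (simp add: r_def)
  have termwise: "r * real (cnt u R) \<le> real (cnt v R)" if R: "R \<in> PK" for R
  proof (cases "u < card R")
    case True
    then show ?thesis using cnt0 by simp
  next
    case False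
    define j where "j = card R"
    have RD: "R \<subseteq> ?D" and kj: "k < j" using R by (auto simp: PK_def j_def)
    have ju: "j \<le> u" using False by (simp add: j_def)
    define N where "N = n - j"
    have c1: "cnt v R = N choose k"
    proof -
      have "cnt v R = N choose (v - j)" using cntv[OF RD, of v] ju assms(5) by (simp add: j_def N_def)
      also have "v - j = N - k" using assms(4) ju assms(5) by (simp add: N_def)
      also have "N choose (N - k) = N choose k"
        using ju assms(4,5) by (intro binomial_symmetric[symmetric]) (simp add: N_def)
      finally show ?thesis .
    qed
    have c2: "cnt u R = N choose b"
    proof -
      have "cnt u R = N choose (u - j)" using cntv[OF RD, of u] ju by (simp add: j_def N_def)
      also have "u - j = N - b" using ju un by (simp add: N_def b_def)
      also have "N choose (N - b) = N choose b"
        using ju un by (intro binomial_symmetric[symmetric]) (simp add: N_def b_def)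
      finally show ?thesis .
    qed
    have br: "(M choose k) * (N choose b) \<le> (N choose k) * (M choose b)"
      by (rule binom_ratio) (use kb kj ju un in \<open>auto simp: b_def N_def M_def\<close>)
    then have "real (M choose k) * real (N choose b) \<le> real (N choose k) * real (M choose b)"
      by (metis of_nat_le_iff of_nat_mult)
    then have "real (M choose k) * real (N choose b) / real (M choose b) \<le> real (N choose k)"
      using Mb by (simp add: pos_divide_le_eq)
    then show ?thesis by (simp add: r_def c1 c2)
  qed
  have main: "r * (\<Sum>S\<in>Sm u. ?Q S - 1) \<le> (\<Sum>S\<in>Sm v. ?Q S - 1)"
  proof -
    have "r * (\<Sum>S\<in>Sm u. ?Q S - 1) = (\<Sum>R\<in>PK. ?A R * (r * real (cnt u R)))"
      by (simp add: E1 sum_distrib_left mult_ac)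
    also have "\<dots> \<le> (\<Sum>R\<in>PK. ?A R * real (cnt v R))"
    proof (rule sum_mono)
      fix R assume R: "R \<in> PK"
      then have "?A R \<ge> 0" using Af_nonneg[OF q0] by (auto simp: PK_def)
      then show "?A R * (r * real (cnt u R)) \<le> ?A R * real (cnt v R)"
        using termwise[OF R] by (simp add: mult_left_mono)
    qed
    also have "\<dots> = (\<Sum>S\<in>Sm v. ?Q S - 1)" by (simp add: E1)
    finally show ?thesis .
  qed
  have cardSm: "card (Sm m) = n choose m" for m
    unfolding Sm_def by (simp add: n_subsets)
  have qpos: "real q > 0" using q0 by simp
  have Sv: "(\<Sum>S\<in>Sm v. ?Q S - 1) = real (n choose v) * (real q ^ (2 * v - n) - 1)"
  proof -
    have "?Q S = real q ^ (2 * v - n)" if S: "S \<in> Sm v" for S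
    proof -
      have SD: "S \<subseteq> ?D" and cS: "card S = v" using S by (auto simp: Sm_def)
      have cDS: "card (?D - S) = k" using SD cS nv by (simp add: card_Diff_subset finite_subset)
      have "?Q (?D - S) = 1" using F1[OF ku q0 kn, of "?D - S"] cDS by auto
      then have "real q ^ k * ?Q S = real q ^ v" using F2[OF q0 SD, of psi] cDS cS by simp
      also have "v = (2 * v - n) + k" using assms(4) k2 by simp
      finally have "real q ^ k * ?Q S = real q ^ k * real q ^ (2 * v - n)"
        by (simp add: power_add mult.commute)
      then show ?thesis using qpos by simp
    qed
    then have "(\<Sum>S\<in>Sm v. ?Q S - 1) = (\<Sum>S\<in>Sm v. real q ^ (2 * v - n) - 1)" by simp
    then show ?thesis by (simp add: cardSm)
  qed
  have Su: "(\<Sum>S\<in>Sm u. ?Q S - 1) \<ge> real (n choose u) * (real q ^ (2 * u - n) - 1)"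
  proof -
    have "?Q S \<ge> real q ^ (2 * u - n)" if S: "S \<in> Sm u" for S
    proof -
      have SD: "S \<subseteq> ?D" and cS: "card S = u" using S by (auto simp: Sm_def)
      have cDS: "card (?D - S) = n - u" using SD cS by (simp add: card_Diff_subset finite_subset)
      have "?Q (?D - S) \<ge> 1" using F3[of n q psi "?D - S"] ku q0 by (auto simp: k_uniform_def)
      then have "real q ^ u * 1 \<le> real q ^ u * ?Q (?D - S)"
        by (intro mult_left_mono) auto
      then have "real q ^ u \<le> real q ^ u * ?Q (?D - S)" by simp
      also have "\<dots> = real q ^ (n - u) * ?Q S" using F2[OF q0 SD, of psi] cDS cS by simp
      finally have h: "real q ^ u \<le> real q ^ (n - u) * ?Q S" .
      have "u = (2 * u - n) + (n - u)" using u2 un by simp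
      then have "real q ^ u = real q ^ (n - u) * real q ^ (2 * u - n)"
        by (metis mult.commute power_add)
      then show ?thesis using h qpos by (simp add: mult_le_cancel_left_pos)
    qed
    then have "(\<Sum>S\<in>Sm u. real q ^ (2 * u - n) - 1) \<le> (\<Sum>S\<in>Sm u. ?Q S - 1)"
      by (intro sum_mono) simp
    then show ?thesis by (simp add: cardSm)
  qed
  define X where "X = (real q ^ (2 * v - n) - 1) * real (n choose v)"
  define Y where "Y = (real q ^ (2 * u - n) - 1) * real (n choose u)"
  have Ypos: "Y > 0"
  proof -
    have "real q ^ (2 * u - n) > 1" using assms(1) u2 by (intro one_less_power) auto
    moreover have "real (n choose u) > 0" using un by simp
    ultimately show ?thesis by (simp add: Y_def)
  qed
  have "r > X / Y" using assms(6) by (simp add: r_def X_def Y_def M_def b_def nv)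
  then have "r * Y > X" using Ypos by (simp add: pos_divide_less_eq)
  moreover have "r * Y \<le> X"
  proof -
    have "r * Y \<le> r * (\<Sum>S\<in>Sm u. ?Q S - 1)"
      using Su r0 by (intro mult_left_mono) (simp_all add: Y_def mult.commute)
    also have "\<dots> \<le> (\<Sum>S\<in>Sm v. ?Q S - 1)" by (rule main)
    also have "\<dots> = X" by (simp add: Sv X_def mult.commute)
    finally show ?thesis .
  qed
  ultimately show False by simp
qed

end
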